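(* Let $k\ge 1$ and $m\ge 0$ be integers. Let $K$ be the set of all odd integers in the closed interval $[1,6k-1]$, and let $$T=\bigcup_{j=0}^{m}5^jK,\qquad\text{where } cU=\{cu:\ u\in U\}.$$ Then $|T|=3k(m+1)-m\lfloor(3k+2)/5\rfloor$. *)

theory Defs
  imports Complex_Main
begin

end

theory Submission
  imports Defs
begin

lemma oddK_img:
  fixes N :: int
  shows "{x :: int. odd x \<and> 1 \<le> x \<and> x \<le> N} = (\<lambda>i. 2*i+1) ` {0..<(N+1) div 2}"
proof (rule set_eqI, rule iffI)
  fix x assume "x \<in> {x :: int. odd x \<and> 1 \<le> x \<and> x \<le> N}"
  then have h: "odd x" "1 \<le> x" "x \<le> N" by auto
  then obtain i where i: "x = 2*i+1" by (metis oddE)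
  show "x \<in> (\<lambda>i. 2*i+1) ` {0..<(N+1) div 2}"
    using h i by (intro image_eqI[of _ _ i]) auto
next
  fix x assume "x \<in> (\<lambda>i. 2*i+1) ` {0..<(N+1) div 2}"
  then obtain i where "x = 2*i+1" "0 \<le> i" "i < (N+1) div 2" by auto
  then show "x \<in> {x :: int. odd x \<and> 1 \<le> x \<and> x \<le> N}" by auto
qed

lemma card_oddK:
  fixes N :: int
  shows "card {x :: int. odd x \<and> 1 \<le> x \<and> x \<le> N} = nat ((N+1) div 2)"
proof -
  have "inj_on (\<lambda>i::int. 2*i+1) {0..<(N+1) div 2}" by (auto simp: inj_on_def)
  then show ?thesis by (simp add: oddK_img card_image)
qed

theorem lemma2p3:
  fixes k m :: nat
  assumes "k \<ge> 1"
  defines "K \<equiv> {x :: int. odd x \<and> 1 \<le> x \<and> x \<le> 6 * int k - 1}"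
  defines "T \<equiv> (\<Union>j\<in>{0..m}. (\<lambda>u. 5 ^ j * u) ` K)"
  shows "int (card T) = 3 * int k * (int m + 1) - int m * \<lfloor>(3 * real k + 2) / 5\<rfloor>"
proof -
  define c :: nat where "c = (3*k+2) div 5"
  have fl: "\<lfloor>(3 * real k + 2) / 5\<rfloor> = int c"
  proof -
    have "(3 * real k + 2) / 5 = real (3*k+2) / real (5::nat)" by simp
    then show ?thesis unfolding c_def by (simp only: floor_divide_of_nat_eq)
  qed
  have finK: "finite K" unfolding K_def by (rule finite_subset[of _ "{1..6*int k - 1}"]) auto
  have cK: "card K = 3*k" unfolding K_def card_oddK by simp
  define K' where "K' = {x\<in>K. 5 dvd x}"
  have K'eq: "K' = (\<lambda>y. 5*y) ` {x :: int. odd x \<and> 1 \<le> x \<and> x \<le> (6 * int k - 1) div 5}"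
  proof (rule set_eqI, rule iffI)
    fix x assume "x \<in> K'"
    then have h: "odd x" "1 \<le> x" "x \<le> 6*int k - 1" "5 dvd x" unfolding K'_def K_def by auto
    then obtain y where y: "x = 5*y" by blast
    have "odd y" using h y by auto
    moreover have "1 \<le> y" using h y by linarith
    moreover have "y \<le> (6 * int k - 1) div 5" using h y by linarith
    ultimately show "x \<in> (\<lambda>y. 5*y) ` {x :: int. odd x \<and> 1 \<le> x \<and> x \<le> (6 * int k - 1) div 5}"
      using y by auto
  next
    fix x assume "x \<in> (\<lambda>y. 5*y) ` {x :: int. odd x \<and> 1 \<le> x \<and> x \<le> (6 * int k - 1) div 5}"
    then obtain y where y: "x = 5*y" "odd y" "1 \<le> y" "y \<le> (6 * int k - 1) div 5" by auto
    then have "5*y \<le> 6*int k - 1" by linarith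
    then show "x \<in> K'" using y unfolding K'_def K_def by auto
  qed
  have cK': "card K' = c"
  proof -
    have "inj (\<lambda>y::int. 5*y)" by (auto simp: inj_on_def)
    then have "card K' = nat (((6 * int k - 1) div 5 + 1) div 2)"
      unfolding K'eq by (subst card_image) (auto simp: card_oddK inj_on_def)
    also have "... = c" unfolding c_def by simp
    finally show ?thesis .
  qed
  define S where "S m = (\<Union>j\<in>{0..m}. (\<lambda>u. 5 ^ j * u) ` K)" for m
  have finS: "finite (S n)" for n unfolding S_def using finK by auto
  have KS: "K \<subseteq> S n" for n unfolding S_def by (auto intro!: bexI[of _ 0])
  have SucS: "S (Suc n) = K \<union> (\<lambda>u. 5*u) ` S n" for n
  proof -
    have "{0..Suc n} = insert 0 (Suc ` {0..n})" by (auto simp: image_iff)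
    then have "S (Suc n) = (\<Union>j\<in>insert 0 (Suc ` {0..n}). (\<lambda>u. 5 ^ j * u) ` K)"
      unfolding S_def by simp
    also have "\<dots> = K \<union> (\<Union>j\<in>{0..n}. (\<lambda>u. 5 ^ Suc j * u) ` K)"
      by (simp del: image_Suc_atLeastAtMost)
    also have "\<dots> = K \<union> (\<lambda>u. 5*u) ` S n" unfolding S_def image_UN image_image
      by (simp add: mult.assoc)
    finally show ?thesis .
  qed
  have inter: "K \<inter> (\<lambda>u. 5*u) ` S n = K'" for n
  proof (rule set_eqI, rule iffI)
    fix x assume "x \<in> K \<inter> (\<lambda>u. 5*u) ` S n"
    then show "x \<in> K'" unfolding K'_def by auto
  next
    fix x assume "x \<in> K'"
    then have xK: "x \<in> K" by (simp add: K'_def)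
    from \<open>x \<in> K'\<close> obtain y where y: "x = 5*y" "odd y" "1 \<le> y" "y \<le> (6 * int k - 1) div 5"
      unfolding K'eq by auto
    then have "y \<le> 6 * int k - 1" by linarith
    then have "y \<in> S n" using y KS unfolding K_def by auto
    then show "x \<in> K \<inter> (\<lambda>u. 5*u) ` S n" using y xK by auto
  qed
  have main: "int (card (S n)) = 3 * int k * (int n + 1) - int n * int c" for n
  proof (induction n)
    case 0
    have "S 0 = K" unfolding S_def by simp
    then show ?case using cK by simp
  next
    case (Suc n)
    have inj: "inj (\<lambda>u::int. 5*u)" by (auto simp: inj_on_def)
    have "card (K \<union> (\<lambda>u. 5*u) ` S n) + card (K \<inter> (\<lambda>u. 5*u) ` S n) = card K + card ((\<lambda>u. 5*u) ` S n)"
      using card_Un_Int[of K "(\<lambda>u. 5*u) ` S n"] finK finS[of n] by simp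
    moreover have "card ((\<lambda>u. 5*u) ` S n) = card (S n)" by (rule card_image) (auto simp: inj_on_def)
    ultimately have "card (S (Suc n)) + c = 3*k + card (S n)" using SucS inter cK cK' by simp
    then have "int (card (S (Suc n))) + int c = 3 * int k + int (card (S n))" by linarith
    then show ?case using Suc.IH by (simp add: algebra_simps)
  qed
  have "T = S m" unfolding T_def S_def by simp
  then show ?thesis using main fl by simp
qed

end
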